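(* For $\mathbf{u}\in\mathbb{R}^6$ define $\mathbf{w}^{\pm}(\mathbf{u})=\frac12\left(\mathbf{u}\pm\frac{\mathbf{f}(\mathbf{u})}{\alpha(\mathbf{u})}\right)$ with $\alpha(\mathbf{u})=|v_1|+\sqrt{3p_{11}/\rho}$. If $\mathbf{u}\in\mathbb{U}_{\mathrm{ad}}$, then $\mathbf{w}^+(\mathbf{u})\in\mathbb{U}_{\mathrm{ad}}$ and $\mathbf{w}^-(\mathbf{u})\in\mathbb{U}_{\mathrm{ad}}$.
   Context: Ten-Moment equations: conservative variable $\mathbf{u}=(\rho,\rho v_1,\rho v_2,E_{11},E_{12},E_{22})^\top$; pressure tensor components $p_{11}=2E_{11}-\rho v_1^2$, $p_{12}=2E_{12}-\rho v_1v_2$, $p_{22}=2E_{22}-\rho v_2^2$. $\mathbb{U}_{\mathrm{ad}}=\{\mathbf{u}\in\mathbb{R}^6:\rho>0\text{ and }\mathbf{x}^\top\mathbf{p}\mathbf{x}>0\ \forall\mathbf{x}\in\mathbb{R}^2\setminus\{0\}\}$. The $x$-direction flux is $\mathbf{f}(\mathbf{u})=\big(\rho v_1,\ \rho v_1^2+p_{11},\ \rho v_1v_2+p_{12},\ (E_{11}+p_{11})v_1,\ E_{12}v_1+\tfrac12(p_{11}v_2+p_{12}v_1),\ E_{22}v_1+p_{12}v_2\big)^\top$. *)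

theory Defs
  imports Complex_Main
begin

text \<open>Conservative state u = (rho, rho v1, rho v2, E11, E12, E22) in R^6, as a 6-tuple.\<close>
type_synonym state = "real \<times> real \<times> real \<times> real \<times> real \<times> real"

definition rho :: "state \<Rightarrow> real" where
  "rho u = (case u of (r, m1, m2, e11, e12, e22) \<Rightarrow> r)"

definition vel1 :: "state \<Rightarrow> real" where
  "vel1 u = (case u of (r, m1, m2, e11, e12, e22) \<Rightarrow> m1 / r)"

definition vel2 :: "state \<Rightarrow> real" where
  "vel2 u = (case u of (r, m1, m2, e11, e12, e22) \<Rightarrow> m2 / r)"

definition p11 :: "state \<Rightarrow> real" where
  "p11 u = (case u of (r, m1, m2, e11, e12, e22) \<Rightarrow> 2 * e11 - r * (vel1 u)^2)"

definition p12 :: "state \<Rightarrow> real" where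
  "p12 u = (case u of (r, m1, m2, e11, e12, e22) \<Rightarrow> 2 * e12 - r * vel1 u * vel2 u)"

definition p22 :: "state \<Rightarrow> real" where
  "p22 u = (case u of (r, m1, m2, e11, e12, e22) \<Rightarrow> 2 * e22 - r * (vel2 u)^2)"

definition Uad :: "state set" where
  "Uad = {u. rho u > 0 \<and>
     (\<forall>x1 x2 :: real. (x1, x2) \<noteq> (0, 0) \<longrightarrow>
        x1 * (p11 u * x1 + p12 u * x2) + x2 * (p12 u * x1 + p22 u * x2) > 0)}"

definition flux :: "state \<Rightarrow> state" where
  "flux u = (case u of (r, m1, m2, e11, e12, e22) \<Rightarrow>
     (let v1 = vel1 u; v2 = vel2 u; q11 = p11 u; q12 = p12 u; q22 = p22 u in
      (r * v1,
       r * v1^2 + q11,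
       r * v1 * v2 + q12,
       (e11 + q11) * v1,
       e12 * v1 + (q11 * v2 + q12 * v1) / 2,
       e22 * v1 + q12 * v2)))"

definition alpha :: "state \<Rightarrow> real" where
  "alpha u = \<bar>vel1 u\<bar> + sqrt (3 * p11 u / rho u)"

definition scale6 :: "real \<Rightarrow> state \<Rightarrow> state" where
  "scale6 c u = (case u of (a1, a2, a3, a4, a5, a6) \<Rightarrow> (c*a1, c*a2, c*a3, c*a4, c*a5, c*a6))"

definition add6 :: "state \<Rightarrow> state \<Rightarrow> state" where
  "add6 u w = (case u of (a1, a2, a3, a4, a5, a6) \<Rightarrow> case w of (b1, b2, b3, b4, b5, b6) \<Rightarrow>
     (a1+b1, a2+b2, a3+b3, a4+b4, a5+b5, a6+b6))"

definition wplus :: "state \<Rightarrow> state" where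
  "wplus u = scale6 (1/2) (add6 u (scale6 (1 / alpha u) (flux u)))"

definition wminus :: "state \<Rightarrow> state" where
  "wminus u = scale6 (1/2) (add6 u (scale6 (- 1 / alpha u) (flux u)))"

end

theory Submission
  imports Defs
begin

lemma pd_iff:
  fixes a b c :: real
  shows "(\<forall>x1 x2 :: real. (x1, x2) \<noteq> (0, 0) \<longrightarrow> x1 * (a * x1 + b * x2) + x2 * (b * x1 + c * x2) > 0)
     \<longleftrightarrow> a > 0 \<and> a * c - b^2 > 0"
proof
  assume H: "\<forall>x1 x2 :: real. (x1, x2) \<noteq> (0, 0) \<longrightarrow> x1 * (a * x1 + b * x2) + x2 * (b * x1 + c * x2) > 0"
  from H[rule_format, of 1 0] have a: "a > 0" by simp
  from H[rule_format, of "-b" a] a have "(-b) * (a * (-b) + b * a) + a * (b * (-b) + c * a) > 0" by simp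
  hence "a * (a * c - b^2) > 0" by (simp add: algebra_simps power2_eq_square)
  with a show "a > 0 \<and> a * c - b^2 > 0" by (simp add: zero_less_mult_iff)
next
  assume H: "a > 0 \<and> a * c - b^2 > 0"
  show "\<forall>x1 x2 :: real. (x1, x2) \<noteq> (0, 0) \<longrightarrow> x1 * (a * x1 + b * x2) + x2 * (b * x1 + c * x2) > 0"
  proof (intro allI impI)
    fix x1 x2 :: real assume nz: "(x1, x2) \<noteq> (0, 0)"
    have eq: "a * (x1 * (a * x1 + b * x2) + x2 * (b * x1 + c * x2)) = (a*x1 + b*x2)^2 + (a*c - b^2) * x2^2"
      by (simp add: algebra_simps power2_eq_square)
    have "(a*x1 + b*x2)^2 + (a*c - b^2) * x2^2 > 0"
    proof (cases "x2 = 0")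
      case True
      with nz have "x1 \<noteq> 0" by simp
      with True H show ?thesis by simp
    next
      case False
      with H have "(a*c - b^2) * x2^2 > 0" by simp
      thus ?thesis by (smt (verit) zero_le_power2)
    qed
    with eq H show "x1 * (a * x1 + b * x2) + x2 * (b * x1 + c * x2) > 0"
      by (metis zero_less_mult_pos)
  qed
qed

lemma core:
  fixes r v w a b c s k :: real
  assumes r: "r > 0" and a: "a > 0" and ac: "a * c - b^2 > 0"
    and kdef: "k = 1 + s * v" and k: "k > 0" and D: "k^2 * r - s^2 * a > 0"
    and u: "u = (r, r*v, r*w, (a + r*v^2)/2, (b + r*v*w)/2, (c + r*w^2)/2)"
  shows "scale6 (1/2) (add6 u (scale6 s (flux u))) \<in> Uad"
proof -
  let ?D = "k^2 * r - s^2 * a"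
  let ?u = "scale6 (1/2) (add6 u (scale6 s (flux u)))"
  have rk: "r * k > 0" using r k by simp
  have nz: "r \<noteq> 0" "k \<noteq> 0" using r k by auto
  have e: "?u = (r*k/2, (r*v*k + s*a)/2, (r*w*k + s*b)/2,
       ((a + r*v^2)*k + 2*s*a*v)/4, ((b + r*v*w)*k + s*(a*w + b*v))/4,
       ((c + r*w^2)*k + 2*s*b*w)/4)"
    using r unfolding u kdef scale6_def add6_def flux_def vel1_def vel2_def p11_def p12_def p22_def Let_def
    by (simp add: field_simps power2_eq_square)
  have rho': "rho ?u = r*k/2" unfolding e rho_def by simp
  have v1: "vel1 ?u = (r*v*k + s*a) / (r*k)" unfolding e vel1_def using rk nz by (simp add: field_simps)
  have v2: "vel2 ?u = (r*w*k + s*b) / (r*k)" unfolding e vel2_def using rk nz by (simp add: field_simps)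
  have P11: "p11 ?u = a * ?D / (2*r*k)"
    unfolding p11_def v1 unfolding e using rk nz by (simp add: field_simps power2_eq_square)
  have P12: "p12 ?u = b * ?D / (2*r*k)"
    unfolding p12_def v1 v2 unfolding e using rk nz by (simp add: field_simps power2_eq_square)
  have P22: "p22 ?u = (c * k^2 * r - s^2 * b^2) / (2*r*k)"
    unfolding p22_def v2 unfolding e using rk nz by (simp add: field_simps power2_eq_square)
  have A: "p11 ?u > 0" unfolding P11 using a D r k by (intro divide_pos_pos mult_pos_pos) auto
  have det: "p11 ?u * p22 ?u - (p12 ?u)^2 = ?D * (r * k^2) * (a*c - b^2) / (2*r*k)^2"
    unfolding P11 P12 P22 using rk nz by (simp add: field_simps power2_eq_square)
  have "?D * (r * k^2) * (a*c - b^2) / (2*r*k)^2 > 0" using D r k ac by (intro divide_pos_pos mult_pos_pos) auto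
  hence B: "p11 ?u * p22 ?u - (p12 ?u)^2 > 0" using det by simp
  show ?thesis unfolding Uad_def using pd_iff[of "p11 ?u" "p12 ?u" "p22 ?u"] A B rho' rk by simp
qed

lemma kd:
  fixes r a v q al s \<sigma> :: real
  assumes r: "r > 0" and a: "a > 0" and q: "q = sqrt (3*a/r)" and al: "al = \<bar>v\<bar> + q"
    and s: "s = \<sigma> / al" and sg: "\<sigma> = 1 \<or> \<sigma> = -1"
  shows "1 + s*v > 0 \<and> (1 + s*v)^2 * r - s^2 * a > 0"
proof -
  have qp: "q > 0" using q r a by simp
  have q2: "q^2 = 3*a/r" using q r a by simp
  have alp: "al > 0" using al qp by simp
  have h: "al + \<sigma>*v \<ge> q" using sg al by auto
  have ss: "\<sigma>^2 = 1" using sg by auto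
  have k: "1 + s*v = (al + \<sigma>*v)/al" using alp s by (simp add: field_simps)
  have D: "(1 + s*v)^2 * r - s^2 * a = ((al + \<sigma>*v)^2 * r - a) / al^2"
    unfolding k s using alp ss by (simp add: field_simps power2_eq_square)
  have "(al + \<sigma>*v)^2 \<ge> q^2" using h qp by (intro power_mono) auto
  hence "(al + \<sigma>*v)^2 * r \<ge> 3*a" using q2 r by (simp add: field_simps)
  hence "(al + \<sigma>*v)^2 * r - a > 0" using a by simp
  hence "(1 + s*v)^2 * r - s^2 * a > 0" unfolding D using alp by simp
  moreover have "1 + s*v > 0" unfolding k using h qp alp by simp
  ultimately show ?thesis by simp
qed

theorem theorem2:
  fixes u :: state
  assumes "u \<in> Uad"
  shows "wplus u \<in> Uad \<and> wminus u \<in> Uad"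
proof -
  obtain r m1 m2 e11 e12 e22 where uu: "u = (r, m1, m2, e11, e12, e22)" by (cases u) auto
  define v where "v = m1 / r"
  define w where "w = m2 / r"
  define a where "a = p11 u"
  define b where "b = p12 u"
  define c where "c = p22 u"
  have r: "r > 0" using assms uu unfolding Uad_def rho_def by simp
  have pd: "a > 0 \<and> a * c - b^2 > 0"
    using assms pd_iff[of a b c] unfolding Uad_def a_def b_def c_def by blast
  have u2: "u = (r, r*v, r*w, (a + r*v^2)/2, (b + r*v*w)/2, (c + r*w^2)/2)"
    using r unfolding uu v_def w_def a_def b_def c_def p11_def p12_def p22_def vel1_def vel2_def
    by (simp add: field_simps)
  have al: "alpha u = \<bar>v\<bar> + sqrt (3*a/r)"
    unfolding alpha_def a_def using uu v_def by (simp add: vel1_def rho_def)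
  have "wplus u \<in> Uad"
  proof -
    have K: "1 + (1 / alpha u)*v > 0 \<and> (1 + (1 / alpha u)*v)^2 * r - (1 / alpha u)^2 * a > 0"
      using kd[OF r pd[THEN conjunct1] refl al, of "1 / alpha u" 1] by simp
    show ?thesis unfolding wplus_def
      using core[OF r pd[THEN conjunct1] pd[THEN conjunct2] refl _ _ u2] K by blast
  qed
  moreover have "wminus u \<in> Uad"
  proof -
    have K: "1 + (- 1 / alpha u)*v > 0 \<and> (1 + (- 1 / alpha u)*v)^2 * r - (- 1 / alpha u)^2 * a > 0"
      using kd[OF r pd[THEN conjunct1] refl al, of "- 1 / alpha u" "-1"] by simp
    show ?thesis unfolding wminus_def
      using core[OF r pd[THEN conjunct1] pd[THEN conjunct2] refl _ _ u2] K by blast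
  qed
  ultimately show ?thesis by simp
qed

end
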